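(* For every $\delta\in\mathcal{T}_D$ and $\kappa\in\mathcal{T}_C$: (1) $[\![\delta]\!]\subseteq\mathcal{SN}$ and $[\![\kappa]\!]\subseteq\mathcal{SN}^*$; (2) for every term variable $x$ and stack $\vec N$, if $x\vec N\in\mathcal{SN}$ then $x\vec N\in[\![\delta]\!]$; (3) for every $n\ge|\kappa|$ and term variables $x_1,\dots,x_n$, the stack $x_1:\cdots:x_n$ belongs to $[\![\kappa]\!]$.
   Context: $\lambda\mu$-calculus (Parigot). Terms $M,N ::= x \mid \lambda x.M \mid MN \mid \mu\alpha.[\beta]M$ over disjoint denumerable sets of term variables and names ($\lambda$ binds $x$, $\mu$ binds $\alpha$). $M[N/x]$ is capture-avoiding substitution; structural substitution $T[\alpha\Leftarrow L]$ replaces every subterm $[\alpha]N$ of $T$ by $[\alpha]N'L$ where $N'=N[\alpha\Leftarrow L]$ (recursively), commuting with all other constructors. Reduction is the compatible closure of $(\lambda x.M)N\to M[N/x]$ and $(\mu\beta.[\gamma]M)N\to\mu\beta.(([\gamma]M)[\beta\Leftarrow N])$. $\mathcal{SN}$ is the set of terms with no infinite reduction sequence. A stack is a finite (possibly empty) sequence $\vec L=L_1:\cdots:L_k$ of terms, and $M\vec L$ denotes $ML_1\cdots L_k$; $\mathcal{SN}^*$ is the set of stacks all of whose elements are in $\mathcal{SN}$. Types: with constant $\nu$ and symbol $\omega$ (not itself a type), $\mathcal{T}_D:\ \delta ::= \nu \mid \omega\to\nu \mid \kappa\to\nu \mid \delta\wedge\delta$; $\mathcal{T}_C:\ \kappa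 ::= \delta\times\omega \mid \delta\times\kappa \mid \kappa\wedge\kappa$. Interpretation: $[\![\nu]\!]=[\![\omega\to\nu]\!]=\mathcal{SN}$; $[\![\kappa\to\nu]\!]=\{M\mid \forall\vec L\in[\![\kappa]\!].\ M\vec L\in\mathcal{SN}\}$; $[\![\delta\times\omega]\!]=\{N:\vec L\mid N\in[\![\delta]\!],\vec L\in\mathcal{SN}^*\}$; $[\![\delta\times\kappa]\!]=\{N:\vec L\mid N\in[\![\delta]\!],\vec L\in[\![\kappa]\!]\}$; $[\![\sigma\wedge\tau]\!]=[\![\sigma]\!]\cap[\![\tau]\!]$. Length: $|\delta\times\omega|=1$, $|\delta\times\kappa|=1+|\kappa|$, $|\kappa_1\wedge\kappa_2|=\max(|\kappa_1|,|\kappa_2|)$. *)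

theory Defs
  imports Main
begin

text \<open>Lambda-mu terms in locally nameless / de Bruijn form, with two separate index
spaces: term variables (bound by Lam) and names (bound by Mu).
Mu b M stands for mu alpha.[beta]M, where alpha is the name bound by this Mu
(index 0 inside M) and beta is the name with index b inside M.\<close>

datatype trm = Var nat | Lam trm | App trm trm | Mu nat trm

fun lift_t :: "nat \<Rightarrow> trm \<Rightarrow> trm" where
  "lift_t k (Var x) = Var (if x < k then x else Suc x)"
| "lift_t k (Lam M) = Lam (lift_t (Suc k) M)"
| "lift_t k (App M N) = App (lift_t k M) (lift_t k N)"
| "lift_t k (Mu b M) = Mu b (lift_t k M)"

fun lift_n :: "nat \<Rightarrow> trm \<Rightarrow> trm" where
  "lift_n k (Var x) = Var x"
| "lift_n k (Lam M) = Lam (lift_n k M)"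
| "lift_n k (App M N) = App (lift_n k M) (lift_n k N)"
| "lift_n k (Mu b M) = Mu (if b < Suc k then b else Suc b) (lift_n (Suc k) M)"

fun subst_t :: "trm \<Rightarrow> nat \<Rightarrow> trm \<Rightarrow> trm" where
  "subst_t (Var x) k N = (if x < k then Var x else if x = k then N else Var (x - 1))"
| "subst_t (Lam M) k N = Lam (subst_t M (Suc k) (lift_t 0 N))"
| "subst_t (App M1 M2) k N = App (subst_t M1 k N) (subst_t M2 k N)"
| "subst_t (Mu b M) k N = Mu b (subst_t M k (lift_n 0 N))"

text \<open>Structural substitution T[a <= L]: every [a]N becomes [a](N' L).\<close>
fun ssub :: "nat \<Rightarrow> trm \<Rightarrow> trm \<Rightarrow> trm" where
  "ssub a L (Var x) = Var x"
| "ssub a L (Lam M) = Lam (ssub a (lift_t 0 L) M)"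
| "ssub a L (App M N) = App (ssub a L M) (ssub a L N)"
| "ssub a L (Mu b M) =
     (let L' = lift_n 0 L; M' = ssub (Suc a) L' M
      in Mu b (if b = Suc a then App M' L' else M'))"

inductive red :: "trm \<Rightarrow> trm \<Rightarrow> bool" where
  beta: "red (App (Lam M) N) (subst_t M 0 N)"
| mu: "red (App (Mu b M) N)
         (let N' = lift_n 0 N; M' = ssub 0 N' M
          in Mu b (if b = 0 then App M' N' else M'))"
| lam: "red M M' \<Longrightarrow> red (Lam M) (Lam M')"
| appL: "red M M' \<Longrightarrow> red (App M N) (App M' N)"
| appR: "red N N' \<Longrightarrow> red (App M N) (App M N')"
| muC: "red M M' \<Longrightarrow> red (Mu b M) (Mu b M')"

definition SN :: "trm set" where
  "SN = {M. \<not> (\<exists>f. f 0 = M \<and> (\<forall>i. red (f i) (f (Suc i))))}"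

definition app_stack :: "trm \<Rightarrow> trm list \<Rightarrow> trm" where
  "app_stack M Ls = foldl App M Ls"

definition SNstar :: "trm list set" where
  "SNstar = {Ls. \<forall>L \<in> set Ls. L \<in> SN}"

datatype tyD = Nu | OmegaArr | KArr tyC | DAnd tyD tyD
     and tyC = DOmega tyD | DK tyD tyC | CAnd tyC tyC

fun interpD :: "tyD \<Rightarrow> trm set" and interpC :: "tyC \<Rightarrow> trm list set" where
  "interpD Nu = SN"
| "interpD OmegaArr = SN"
| "interpD (KArr k) = {M. \<forall>Ls \<in> interpC k. app_stack M Ls \<in> SN}"
| "interpD (DAnd d1 d2) = interpD d1 \<inter> interpD d2"
| "interpC (DOmega d) = {N # Ls | N Ls. N \<in> interpD d \<and> Ls \<in> SNstar}"
| "interpC (DK d k) = {N # Ls | N Ls. N \<in> interpD d \<and> Ls \<in> interpC k}"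
| "interpC (CAnd k1 k2) = interpC k1 \<inter> interpC k2"

fun lenC :: "tyC \<Rightarrow> nat" where
  "lenC (DOmega d) = 1"
| "lenC (DK d k) = Suc (lenC k)"
| "lenC (CAnd k1 k2) = max (lenC k1) (lenC k2)"

end

theory Submission
  imports Defs
begin

inductive sn :: "trm \<Rightarrow> bool" where
  snI: "(\<And>M'. red M M' \<Longrightarrow> sn M') \<Longrightarrow> sn M"

lemma sn_SN: "sn M \<Longrightarrow> M \<in> SN"
proof (induction rule: sn.induct)
  case (snI M)
  show ?case unfolding SN_def
  proof (clarify)
    fix f assume f: "\<forall>i. red (f i) (f (Suc i))" and M: "M = f 0"
    have r: "red M (f (Suc 0))" using f M by simp
    have "f (Suc 0) \<in> SN" using snI(2)[OF r] .
    moreover have "\<exists>g. g 0 = f (Suc 0) \<and> (\<forall>i. red (g i) (g (Suc i)))"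
      using f by (intro exI[of _ "\<lambda>i. f (Suc i)"]) simp
    ultimately show False unfolding SN_def by blast
  qed
qed

lemma SN_sn: assumes "M \<in> SN" shows "sn M"
proof (rule ccontr)
  assume n: "\<not> sn M"
  have step: "\<And>P. \<not> sn P \<Longrightarrow> \<exists>M'. red P M' \<and> \<not> sn M'"
    by (meson sn.intros)
  define f where "f = rec_nat M (\<lambda>_ P. SOME M'. red P M' \<and> \<not> sn M')"
  have f0: "f 0 = M" by (simp add: f_def)
  have fS: "\<And>i. f (Suc i) = (SOME M'. red (f i) M' \<and> \<not> sn M')" by (simp add: f_def)
  have nf: "\<And>i. \<not> sn (f i)"
  proof -
    fix i show "\<not> sn (f i)"
    proof (induction i)
      case 0 then show ?case using n f0 by simp
    next
      case (Suc i)
      from someI_ex[OF step[OF Suc]] show ?case using fS by simp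
    qed
  qed
  have "\<forall>i. red (f i) (f (Suc i))"
    using someI_ex[OF step[OF nf]] fS by simp
  then show False using assms f0 unfolding SN_def by blast
qed

lemma SN_iff: "M \<in> SN \<longleftrightarrow> sn M" using sn_SN SN_sn by blast

lemma SN_AppL: assumes "App M N \<in> SN" shows "M \<in> SN"
  unfolding SN_def
proof (clarify)
  fix f assume f0: "M = f 0" and f: "\<forall>i. red (f i) (f (Suc i))"
  have "\<exists>g. g 0 = App M N \<and> (\<forall>i. red (g i) (g (Suc i)))"
    using f f0 by (intro exI[of _ "\<lambda>i. App (f i) N"]) (simp add: red.appL)
  then show False using assms unfolding SN_def by blast
qed

lemma SN_AppR: assumes "App M N \<in> SN" shows "N \<in> SN"
  unfolding SN_def
proof (clarify)
  fix f assume f0: "N = f 0" and f: "\<forall>i. red (f i) (f (Suc i))"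
  have "\<exists>g. g 0 = App M N \<and> (\<forall>i. red (g i) (g (Suc i)))"
    using f f0 by (intro exI[of _ "\<lambda>i. App M (f i)"]) (simp add: red.appR)
  then show False using assms unfolding SN_def by blast
qed

lemma app_stack_snoc: "app_stack M (Ms @ [N]) = App (app_stack M Ms) N"
  by (simp add: app_stack_def)

lemma app_stack_append: "app_stack M (Ms @ Ls) = app_stack (app_stack M Ms) Ls"
  by (simp add: app_stack_def)

lemma app_stack_SN: "app_stack M Ms \<in> SN \<Longrightarrow> M \<in> SN"
proof (induction Ms rule: rev_induct)
  case Nil then show ?case by (simp add: app_stack_def)
next
  case (snoc N Ms)
  then have "app_stack M Ms \<in> SN" using SN_AppL by (metis app_stack_snoc)
  then show ?case using snoc.IH by blast
qed

lemma app_stack_SN_args: "app_stack M Ms \<in> SN \<Longrightarrow> \<forall>L\<in>set Ms. L \<in> SN"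
proof (induction Ms rule: rev_induct)
  case Nil then show ?case by simp
next
  case (snoc N Ms)
  then have "App (app_stack M Ms) N \<in> SN" by (simp only: app_stack_snoc)
  then have "app_stack M Ms \<in> SN" "N \<in> SN" using SN_AppL SN_AppR by blast+
  then show ?case using snoc.IH by simp
qed

definition NE :: "trm set" where "NE = {H. \<exists>x Ms. H = app_stack (Var x) Ms}"

lemma red_Var: "red (Var x) T \<Longrightarrow> False"
  by (cases rule: red.cases) auto

lemma NE_shape: "app_stack (Var x) Ms = Lam M \<Longrightarrow> False"
  "app_stack (Var x) Ms = Mu b M \<Longrightarrow> False"
  by (induction Ms rule: rev_induct) (auto simp: app_stack_snoc app_stack_def)

lemma NE_red: "red (app_stack (Var x) Ms) T \<Longrightarrow> T \<in> NE"
proof (induction Ms arbitrary: T rule: rev_induct)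
  case Nil then show ?case using red_Var by (simp add: app_stack_def) blast
next
  case (snoc N Ms)
  from snoc.prems have r: "red (App (app_stack (Var x) Ms) N) T" by (simp add: app_stack_snoc)
  then show ?case
  proof (cases rule: red.cases)
    case (beta M) then show ?thesis using NE_shape(1) by blast
  next
    case (mu b M) then show ?thesis using NE_shape(2) by blast
  next
    case (appL M')
    have "M' \<in> NE" using snoc.IH appL(2) by blast
    then obtain y Ks where "M' = app_stack (Var y) Ks" unfolding NE_def by blast
    then have "T = app_stack (Var y) (Ks @ [N])" using appL(1) by (simp add: app_stack_snoc)
    then show ?thesis unfolding NE_def by blast
  next
    case (appR N')
    then have "T = app_stack (Var x) (Ms @ [N'])" by (simp add: app_stack_snoc)
    then show ?thesis unfolding NE_def by blast
  qed
qed

lemma sn_App_NE: "sn H \<Longrightarrow> H \<in> NE \<Longrightarrow> sn N \<Longrightarrow> sn (App H N)"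
proof (induction H arbitrary: N rule: sn.induct)
  case (snI H)
  have oIH: "\<And>H' N. red H H' \<Longrightarrow> H' \<in> NE \<Longrightarrow> sn N \<Longrightarrow> sn (App H' N)" using snI.IH by blast
  have HNE: "H \<in> NE" using snI.prems by blast
  then obtain x Ms where Hx: "H = app_stack (Var x) Ms" unfolding NE_def by blast
  from \<open>sn N\<close> show ?case
  proof (induction N rule: sn.induct)
    case (snI N)
    have snN: "sn N" using snI.hyps by (rule sn.intros)
    show ?case
    proof (rule sn.intros)
      fix T assume "red (App H N) T"
      then show "sn T"
      proof (cases rule: red.cases)
        case (beta M)
        then have "app_stack (Var x) Ms = Lam M" using Hx by simp
        then show ?thesis using NE_shape(1) by blast
      next
        case (mu b M)
        then have "app_stack (Var x) Ms = Mu b M" using Hx by simp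
        then show ?thesis using NE_shape(2) by blast
      next
        case (appL H')
        have "H' \<in> NE" using Hx appL(2) NE_red by blast
        then show ?thesis using oIH[OF appL(2) _ snN] appL(1) by blast
      next
        case (appR N')
        then show ?thesis using snI.IH by blast
      qed
    qed
  qed
qed

lemma sn_Var: "sn (Var x)"
  by (rule sn.intros) (blast dest: red_Var)

lemma SN_var_stack: "\<forall>L\<in>set Ms. L \<in> SN \<Longrightarrow> app_stack (Var x) Ms \<in> SN"
proof (induction Ms rule: rev_induct)
  case Nil then show ?case using sn_Var SN_iff by (simp add: app_stack_def)
next
  case (snoc N Ms)
  have "sn (app_stack (Var x) Ms)" using snoc SN_iff by simp
  moreover have "sn N" using snoc.prems SN_iff by simp
  ultimately show ?case using sn_App_NE SN_iff unfolding NE_def by (auto simp: app_stack_snoc)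
qed


lemma Var_SN: "Var x \<in> SN" using sn_Var SN_iff by simp

lemma main:
  shows "(interpD d \<subseteq> SN) \<and> (\<forall>x Ns. app_stack (Var x) Ns \<in> SN \<longrightarrow> app_stack (Var x) Ns \<in> interpD d)"
    and "(interpC k \<subseteq> SNstar) \<and> (\<forall>n xs. n \<ge> lenC k \<and> length xs = n \<longrightarrow> map Var xs \<in> interpC k)"
proof (induction d and k)
  case Nu then show ?case by simp
next
  case OmegaArr then show ?case by simp
next
  case (KArr k)
  have 1: "interpD (KArr k) \<subseteq> SN"
  proof
    fix M assume M: "M \<in> interpD (KArr k)"
    have "map Var (replicate (lenC k) 0) \<in> interpC k" using KArr by (metis length_replicate order_refl)
    then have "app_stack M (map Var (replicate (lenC k) 0)) \<in> SN" using M by simp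
    then show "M \<in> SN" using app_stack_SN by blast
  qed
  have 2: "\<forall>x Ns. app_stack (Var x) Ns \<in> SN \<longrightarrow> app_stack (Var x) Ns \<in> interpD (KArr k)"
  proof (intro allI impI)
    fix x Ns assume h: "app_stack (Var x) Ns \<in> SN"
    have "\<forall>Ls\<in>interpC k. app_stack (app_stack (Var x) Ns) Ls \<in> SN"
    proof
      fix Ls assume "Ls \<in> interpC k"
      then have "\<forall>L\<in>set Ls. L \<in> SN" using KArr unfolding SNstar_def by blast
      moreover have "\<forall>L\<in>set Ns. L \<in> SN" using app_stack_SN_args h by blast
      ultimately show "app_stack (app_stack (Var x) Ns) Ls \<in> SN"
        using SN_var_stack[of "Ns @ Ls" x] by (auto simp: app_stack_append)
    qed
    then show "app_stack (Var x) Ns \<in> interpD (KArr k)" by simp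
  qed
  show ?case using 1 2 by blast
next
  case (DAnd d1 d2)
  have 1: "interpD (DAnd d1 d2) \<subseteq> SN" using DAnd by auto
  have 2: "\<forall>x Ns. app_stack (Var x) Ns \<in> SN \<longrightarrow> app_stack (Var x) Ns \<in> interpD (DAnd d1 d2)"
    using DAnd by simp
  show ?case using 1 2 by blast
next
  case (DOmega d)
  have 1: "interpC (DOmega d) \<subseteq> SNstar" using DOmega by (auto simp: SNstar_def)
  have 3: "\<forall>n xs. n \<ge> lenC (DOmega d) \<and> length xs = n \<longrightarrow> map Var xs \<in> interpC (DOmega d)"
  proof (intro allI impI)
    fix n and xs :: "nat list" assume h: "n \<ge> lenC (DOmega d) \<and> length xs = n"
    then obtain y ys where xs: "xs = y # ys" by (cases xs) auto
    have "Var y \<in> interpD d" using DOmega Var_SN[of y] by (metis app_stack_def foldl_Nil)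
    moreover have "map Var ys \<in> SNstar" using Var_SN by (auto simp: SNstar_def)
    ultimately show "map Var xs \<in> interpC (DOmega d)" using xs by simp
  qed
  show ?case using 1 3 by blast
next
  case (DK d k)
  have 1: "interpC (DK d k) \<subseteq> SNstar" using DK by (auto simp: SNstar_def subset_iff)
  have 3: "\<forall>n xs. n \<ge> lenC (DK d k) \<and> length xs = n \<longrightarrow> map Var xs \<in> interpC (DK d k)"
  proof (intro allI impI)
    fix n and xs :: "nat list" assume h: "n \<ge> lenC (DK d k) \<and> length xs = n"
    then obtain y ys where xs: "xs = y # ys" by (cases xs) auto
    have "Var y \<in> interpD d" using DK Var_SN[of y] by (metis app_stack_def foldl_Nil)
    moreover have "map Var ys \<in> interpC k" using DK h xs by auto
    ultimately show "map Var xs \<in> interpC (DK d k)" using xs by simp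
  qed
  show ?case using 1 3 by blast
next
  case (CAnd k1 k2)
  have 1: "interpC (CAnd k1 k2) \<subseteq> SNstar" using CAnd by auto
  have 3: "\<forall>n xs. n \<ge> lenC (CAnd k1 k2) \<and> length xs = n \<longrightarrow> map Var xs \<in> interpC (CAnd k1 k2)"
  proof (intro allI impI)
    fix n and xs :: "nat list" assume h: "n \<ge> lenC (CAnd k1 k2) \<and> length xs = n"
    then have "lenC k1 \<le> length xs" "lenC k2 \<le> length xs" by auto
    then have "map Var xs \<in> interpC k1" "map Var xs \<in> interpC k2" using CAnd by blast+
    then show "map Var xs \<in> interpC (CAnd k1 k2)" by simp
  qed
  show ?case using 1 3 by blast
qed

theorem mainTheorem8:
  fixes d :: tyD and k :: tyC
  shows "(interpD d \<subseteq> SN \<and> interpC k \<subseteq> SNstar)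
       \<and> (\<forall>x Ns. app_stack (Var x) Ns \<in> SN \<longrightarrow> app_stack (Var x) Ns \<in> interpD d)
       \<and> (\<forall>n xs. n \<ge> lenC k \<and> length xs = n \<longrightarrow> map Var xs \<in> interpC k)"
  using main(1)[of d] main(2)[of k] by blast

end
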